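(* Let $k\ge 2$, $h=3k+1$, and let $W\in\mathcal W^2_{h\times 4}$ be $2$-full. Then $W$ contains a bench with its seat in column $1$ and legs in column $2$, and a bench with its seat in column $4$ and legs in column $3$.
   Context: A 2-dimensional binary word of dimensions $h\times w$ is an $h\times w$ matrix with entries in $\{\square,\blacksquare\}$ (filled cells $\blacksquare$, empty cells $\square$). Two cells $(i,j),(i',j')$ are adjacent if $|i-i'|+|j-j'|=1$; the degree of a filled cell is the number of filled cells adjacent to it. $\mathcal W^2_{h\times w}$ is the set of $h\times w$ binary words in which every filled cell has degree at most $2$; $W$ is $2$-full if its number of filled cells is maximal in $\mathcal W^2_{h\times w}$. For columns $j,j'$ with $|j-j'|=1$, a bench with seat in column $j$ and legs in column $j'$ is given by integers $n\ge 3$ and $i$ with $1\le i\le i+n-1\le h$ such that the cells $(i,j),(i+1,j),\dots,(i+n-1,j)$ are all filled, the cells $(i,j')$ and $(i+n-1,j')$ are filled, and the cells $(i+1,j'),\dots,(i+n-2,j')$ are empty. *)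

theory Defs
  imports Main
begin

text \<open>A binary word of dimensions h x w is represented by its set of filled cells,
  a subset of {1..h} x {1..w} (rows i, columns j, 1-indexed).\<close>

definition adj :: "nat \<times> nat \<Rightarrow> nat \<times> nat \<Rightarrow> bool" where
  "adj c d \<longleftrightarrow> (fst c = fst d \<and> (snd c = snd d + 1 \<or> snd d = snd c + 1))
              \<or> (snd c = snd d \<and> (fst c = fst d + 1 \<or> fst d = fst c + 1))"

definition degree :: "(nat \<times> nat) set \<Rightarrow> nat \<times> nat \<Rightarrow> nat" where
  "degree W c = card {d \<in> W. adj c d}"

definition W2 :: "nat \<Rightarrow> nat \<Rightarrow> (nat \<times> nat) set set" where
  "W2 h w = {W. W \<subseteq> {1..h} \<times> {1..w} \<and> (\<forall>c\<in>W. degree W c \<le> 2)}"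

definition two_full :: "nat \<Rightarrow> nat \<Rightarrow> (nat \<times> nat) set \<Rightarrow> bool" where
  "two_full h w W \<longleftrightarrow> W \<in> W2 h w \<and> (\<forall>V\<in>W2 h w. card V \<le> card W)"

definition has_bench :: "nat \<Rightarrow> (nat \<times> nat) set \<Rightarrow> nat \<Rightarrow> nat \<Rightarrow> bool" where
  "has_bench h W j j' \<longleftrightarrow> (j = j' + 1 \<or> j' = j + 1) \<and>
     (\<exists>n i. n \<ge> 3 \<and> 1 \<le> i \<and> i + n - 1 \<le> h \<and>
        (\<forall>t<n. (i + t, j) \<in> W) \<and>
        (i, j') \<in> W \<and> (i + n - 1, j') \<in> W \<and>
        (\<forall>t. 1 \<le> t \<and> t \<le> n - 2 \<longrightarrow> (i + t, j') \<notin> W))"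

end

theory Submission
  imports Defs
begin

definition okb :: "bool \<Rightarrow> bool \<Rightarrow> bool \<Rightarrow> bool \<Rightarrow> bool \<Rightarrow> bool \<Rightarrow> bool \<Rightarrow> bool \<Rightarrow> bool \<Rightarrow> bool \<Rightarrow> bool \<Rightarrow> bool \<Rightarrow> bool" where
  "okb p1 p2 p3 p4 c1 c2 c3 c4 n1 n2 n3 n4 \<longleftrightarrow>
     (c1 \<longrightarrow> \<not> (p1 \<and> n1 \<and> c2)) \<and>
     (c2 \<longrightarrow> \<not> (p2 \<and> n2 \<and> c1) \<and> \<not> (p2 \<and> n2 \<and> c3) \<and> \<not> (p2 \<and> c1 \<and> c3) \<and> \<not> (n2 \<and> c1 \<and> c3)) \<and>
     (c3 \<longrightarrow> \<not> (p3 \<and> n3 \<and> c2) \<and> \<not> (p3 \<and> n3 \<and> c4) \<and> \<not> (p3 \<and> c2 \<and> c4) \<and> \<not> (n3 \<and> c2 \<and> c4)) \<and>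
     (c4 \<longrightarrow> \<not> (p4 \<and> n4 \<and> c3))"

definition pcb :: "bool \<Rightarrow> bool \<Rightarrow> bool \<Rightarrow> bool \<Rightarrow> int" where
  "pcb a b c d = of_bool a + of_bool b + of_bool c + of_bool d"

fun le_opt :: "int \<Rightarrow> int option \<Rightarrow> bool" where
  "le_opt a None = False" | "le_opt a (Some v) = (a \<le> v)"

definition T0 :: "bool \<Rightarrow> bool \<Rightarrow> bool \<Rightarrow> bool \<Rightarrow> bool \<Rightarrow> bool \<Rightarrow> bool \<Rightarrow> bool \<Rightarrow> bool \<Rightarrow> int option" where
  "T0 p1 p2 p3 p4 c1 c2 c3 c4 f = (if p1 then (if p2 then (if p3 then (if p4 then (if c1 then (if c2 then None else (if c3 then None else (if c4 then (if f then Some (-1) else None) else (if f then Some (-2) else None)))) else (if c2 then None else (if c3 then None else (if c4 then (if f then None else Some (-1)) else (if f then None else Some (-2)))))) else (if c1 then (if c2 then None else (if c4 then (if f then Some (-1) else None) else (if f then Some (-2) else None))) else (if c2 then None else (if c4 then (if f then None else Some (-1)) else (if f then None else Some (-2)))))) else (if p4 then (if c1 then (if c3 then (if c4 then (if f then Some (1) else None) else (if f then Some (0) else None)) else (if c4 then (if f then Some (0) else None) else (if f then Some (-1) else None))) else (if c2 then (if c3 then (if c4 then (if f then None else Some (1)) else (if f then None else Some (0))) else (if c4 then (if f then None else Some (0)) else (if f then None else Some (-1)))) else (if c3 then (if c4 then (if f then None else Some (0)) else (if f then None else Some (-1))) else (if c4 then (if f then None else Some (-1)) else (if f then None else Some (-2))))))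 else (if c1 then (if c3 then (if c4 then (if f then Some (0) else None) else (if f then Some (-1) else None)) else (if c4 then (if f then Some (-1) else None) else (if f then Some (-2) else None))) else (if c2 then (if c3 then (if c4 then (if f then None else Some (0)) else (if f then None else Some (-1))) else (if c4 then (if f then None else Some (-1)) else (if f then None else Some (-2)))) else (if c3 then (if c4 then (if f then None else Some (-1)) else (if f then None else Some (-2))) else (if c4 then (if f then None else Some (-2)) else (if f then None else Some (-3)))))))) else (if p3 then (if p4 then (if c1 then (if c2 then (if c3 then (if c4 then (if f then Some (1) else None) else (if f then Some (0) else None)) else (if f then Some (0) else None)) else (if c3 then (if c4 then (if f then Some (1) else Some (0)) else (if f then Some (0) else Some (-1))) else (if c4 then (if f then Some (0) else Some (-1)) else Some (-1)))) else (if c2 then (if c3 then (if c4 then (if f then None else Some (1)) else (if f then None else Some (0))) else (if c4 then (if f then None else Some (0)) else (if f then None else Some (-1)))) else (if c3 then (if c4 then (if f then None else Some (0)) else (if f then None else Some (-1))) else (if c4 then (if f then None else Some (-1)) else (if f then None else Some (-2)))))) else (if c1 then (if c2 then (if c3 then (if c4 then (if f then Some (1) else None) else (if f then Some (0) else None)) else (if c4 then (if f then Some (0) else None) else (if f then Some (-1) else None))) else (if c3 then (if c4 then Some (0) else Some (-1)) else (if c4 then Some (-1) else Some (-2)))) else (if c2 then (if c3 then (if c4 then (if f then None else Some (0)) else (if f then None else Some (-1))) else (if c4 then (if f then None else Some (-1)) else (if f then None else Some (-2)))) else (if c3 then (if c4 then (if f then None else Some (-1)) else (if f then None else Some (-2)))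 else (if c4 then (if f then None else Some (-2)) else (if f then None else Some (-3))))))) else (if p4 then (if c1 then (if c2 then (if c3 then (if c4 then (if f then Some (1) else None) else (if f then Some (0) else None)) else (if c4 then (if f then Some (0) else None) else (if f then Some (-1) else None))) else (if c3 then (if c4 then (if f then Some (1) else Some (0)) else (if f then Some (0) else Some (-1))) else (if c4 then (if f then Some (0) else Some (-1)) else (if f then Some (-1) else Some (-2))))) else (if c2 then (if c3 then (if c4 then (if f then None else Some (1)) else (if f then None else Some (0))) else (if c4 then (if f then None else Some (0)) else (if f then None else Some (-1)))) else (if c3 then (if c4 then (if f then None else Some (0)) else (if f then None else Some (-1))) else (if c4 then (if f then None else Some (-1)) else (if f then None else Some (-2)))))) else (if c1 then (if c2 then (if c3 then (if c4 then (if f then Some (0) else None) else (if f then Some (-1) else None)) else (if c4 then (if f then Some (-1) else None) else (if f then Some (-2) else None))) else (if c3 then (if c4 then (if f then Some (0) else Some (-1)) else (if f then Some (-1) else Some (-2))) else (if c4 then (if f then Some (-1) else Some (-2)) else (if f then Some (-2) else Some (-3))))) else (if c2 then (if c3 then (if c4 then (if f then None else Some (0)) else (if f then None else Some (-1))) else (if c4 then (if f then None else Some (-1)) else (if f then None else Some (-2)))) else (if c3 then (if c4 then (if f then None else Some (-1)) else (if f then None else Some (-2))) else (if c4 then (if f then None else Some (-2)) else (if f then None else Some (-3))))))))) else (if p2 then (if p3 then (if p4 then (if c1 then (if c2 then (if c3 then None else (if c4 then (if f then Some (0) else None) else (if f then Some (-1) else None))) else (if c3 then None else (if f then None else Some (-1))))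 else (if c2 then (if c3 then None else (if c4 then (if f then None else Some (-1)) else (if f then None else Some (-2)))) else (if c3 then None else (if f then None else Some (-2))))) else (if c1 then (if c2 then (if c4 then (if f then Some (0) else None) else (if f then Some (-1) else None)) else (if c3 then (if c4 then (if f then None else Some (0)) else (if f then None else Some (-1))) else (if c4 then (if f then None else Some (-1)) else (if f then None else Some (-2))))) else (if c2 then (if c4 then (if f then None else Some (-1)) else (if f then None else Some (-2))) else (if c3 then (if c4 then (if f then None else Some (-1)) else (if f then None else Some (-2))) else (if c4 then (if f then None else Some (-2)) else (if f then None else Some (-3))))))) else (if p4 then (if c1 then (if c2 then (if c3 then (if c4 then (if f then Some (1) else None) else (if f then Some (0) else None)) else (if c4 then (if f then Some (0) else None) else (if f then Some (-1) else None))) else (if c3 then (if c4 then (if f then None else Some (0)) else (if f then None else Some (-1))) else (if c4 then (if f then None else Some (-1)) else (if f then None else Some (-2))))) else (if c2 then (if c3 then (if c4 then (if f then None else Some (0)) else (if f then None else Some (-1))) else (if c4 then (if f then None else Some (-1)) else (if f then None else Some (-2)))) else (if c3 then (if c4 then (if f then None else Some (-1)) else (if f then None else Some (-2))) else (if c4 then (if f then None else Some (-2)) else (if f then None else Some (-3)))))) else (if c1 then (if c2 then (if c3 then (if c4 then (if f then Some (0) else None) else (if f then Some (-1) else None)) else (if c4 then (if f then Some (-1) else None) else (if f then Some (-2) else None))) else (if c3 then (if c4 then (if f then None else Some (-1)) else (if f then None else Some (-2))) else (if c4 then (if f then None else Some (-2)) else (if f then None else Some (-3))))) else (if c2 then (if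 c3 then (if c4 then (if f then None else Some (-1)) else (if f then None else Some (-2))) else (if c4 then (if f then None else Some (-2)) else (if f then None else Some (-3)))) else (if c3 then (if c4 then (if f then None else Some (-2)) else (if f then None else Some (-3))) else (if c4 then (if f then None else Some (-3)) else (if f then None else Some (-4)))))))) else (if p4 then (if c1 then (if c2 then (if c3 then (if c4 then (if f then Some (1) else None) else (if f then Some (0) else None)) else (if c4 then (if f then Some (0) else None) else (if f then Some (-1) else None))) else (if c3 then (if c4 then (if f then None else Some (0)) else (if f then None else Some (-1))) else (if c4 then (if f then None else Some (-1)) else (if f then None else Some (-2))))) else (if c2 then (if c3 then (if c4 then (if f then None else Some (0)) else (if f then None else Some (-1))) else (if c4 then (if f then None else Some (-1)) else (if f then None else Some (-2)))) else (if c3 then (if c4 then (if f then None else Some (-1)) else (if f then None else Some (-2))) else (if c4 then (if f then None else Some (-2)) else (if f then None else Some (-3)))))) else (if c1 then (if c2 then (if c3 then (if c4 then (if f then Some (0) else None) else (if f then Some (-1) else None)) else (if c4 then (if f then Some (-1) else None) else (if f then Some (-2) else None))) else (if c3 then (if c4 then (if f then None else Some (-1)) else (if f then None else Some (-2))) else (if c4 then (if f then None else Some (-2)) else (if f then None else Some (-3))))) else (if c2 then (if c3 then (if c4 then (if f then None else Some (-1)) else (if f then None else Some (-2))) else (if c4 then (if f then None else Some (-2)) else (if f then None else Some (-3)))) else (if c3 then (if c4 then (if f then None else Some (-2)) else (if f then None else Some (-3))) else (if c4 then (if f then None else Some (-3)) else (if f then None else Some (-4)))))))))"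

definition T1 :: "bool \<Rightarrow> bool \<Rightarrow> bool \<Rightarrow> bool \<Rightarrow> bool \<Rightarrow> bool \<Rightarrow> bool \<Rightarrow> bool \<Rightarrow> bool \<Rightarrow> int option" where
  "T1 p1 p2 p3 p4 c1 c2 c3 c4 f = (if p1 then (if p2 then (if p3 then (if p4 then (if c1 then (if c2 then None else (if c3 then None else (if f then Some (2) else None))) else (if c2 then None else (if c3 then None else (if f then None else Some (1))))) else (if c1 then (if c2 then None else (if c3 then (if c4 then (if f then Some (3) else None) else (if f then Some (2) else None)) else (if c4 then (if f then Some (2) else None) else (if f then Some (1) else None)))) else (if c2 then None else (if c3 then (if c4 then (if f then None else Some (2)) else (if f then None else Some (1))) else (if c4 then (if f then None else Some (1)) else (if f then None else Some (0))))))) else (if p4 then (if c1 then (if c2 then (if c3 then (if c4 then (if f then Some (4) else None) else (if f then Some (3) else None)) else (if c4 then (if f then Some (3) else None) else (if f then Some (2) else None))) else (if c3 then (if c4 then (if f then Some (3) else None) else (if f then Some (2) else None)) else (if c4 then (if f then Some (2) else None) else (if f then Some (1) else None)))) else (if c2 then (if c3 then (if c4 then (if f then None else Some (3)) else (if f then None else Some (2))) else (if c4 then (if f then None else Some (2)) else (if f then None else Some (1)))) else (if c3 then (if c4 then (if f then None else Some (2)) else (if f then None else Some (1))) else (if c4 then (if f then None else Some (1)) else (if f then None else Some (0)))))) else (if c1 then (if c2 then (if c3 then (if c4 then (if f then Some (3) else None) else (if f then Some (2) else None)) else (if c4 then (if f then Some (2) else None) else (if f then Some (1) else None))) else (if c3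 then (if c4 then (if f then Some (2) else None) else (if f then Some (1) else None)) else (if c4 then (if f then Some (1) else None) else (if f then Some (0) else None)))) else (if c2 then (if c3 then (if c4 then (if f then None else Some (3)) else (if f then None else Some (2))) else (if c4 then (if f then None else Some (2)) else (if f then None else Some (1)))) else (if c3 then (if c4 then (if f then None else Some (2)) else (if f then None else Some (1))) else (if c4 then (if f then None else Some (1)) else (if f then None else Some (0)))))))) else (if p3 then (if p4 then (if c1 then (if c2 then (if c3 then (if f then Some (3) else None) else (if c4 then (if f then Some (3) else None) else (if f then Some (2) else None))) else (if c3 then (if f then Some (3) else Some (2)) else (if c4 then Some (2) else (if f then Some (2) else Some (1))))) else (if c2 then (if c3 then (if f then None else Some (3)) else (if f then None else Some (2))) else (if c3 then (if f then None else Some (2)) else (if f then None else Some (1))))) else (if c1 then (if c2 then (if c3 then (if c4 then (if f then Some (3) else None) else (if f then Some (2) else None)) else (if c4 then (if f then Some (2) else None) else (if f then Some (1) else None))) else (if c3 then (if c4 then (if f then Some (3) else Some (2)) else (if f then Some (2) else Some (1))) else (if c4 then (if f then Some (2) else Some (1)) else (if f then Some (1) else Some (0))))) else (if c2 then (if c3 then (if c4 then (if f then None else Some (3)) else (if f then None else Some (2))) else (if c4 then (if f then None else Some (2)) else (if f then None else Some (1)))) else (if c3 then (if c4 then (if f then None else Some (2)) else (if f then None else Some (1))) else (if c4 then (if f then None else Some (1)) else (if f then None else Some (0))))))) else (if p4 then (if c1 then (if c2 then (if c3 then (if c4 then (if f then Some (3) else None) else (if f then Some (2) else None)) else (if c4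 then (if f then Some (2) else None) else (if f then Some (1) else None))) else (if c3 then (if c4 then (if f then Some (3) else Some (2)) else (if f then Some (2) else Some (1))) else (if c4 then (if f then Some (2) else Some (1)) else (if f then Some (1) else Some (0))))) else (if c2 then (if c3 then (if c4 then (if f then None else Some (3)) else (if f then None else Some (2))) else (if c4 then (if f then None else Some (2)) else (if f then None else Some (1)))) else (if c3 then (if c4 then (if f then None else Some (2)) else (if f then None else Some (1))) else (if c4 then (if f then None else Some (1)) else (if f then None else Some (0)))))) else (if c1 then (if c2 then (if c3 then (if c4 then (if f then Some (3) else None) else (if f then Some (2) else None)) else (if c4 then (if f then Some (2) else None) else (if f then Some (1) else None))) else (if c3 then (if c4 then Some (2) else Some (1)) else (if c4 then Some (1) else Some (0)))) else (if c2 then (if c3 then (if c4 then (if f then None else Some (2)) else (if f then None else Some (1))) else (if c4 then (if f then None else Some (1)) else (if f then None else Some (0)))) else (if c3 then (if c4 then (if f then None else Some (1)) else (if f then None else Some (0))) else (if c4 then (if f then None else Some (0)) else (if f then None else Some (-1))))))))) else (if p2 then (if p3 then (if p4 then (if c1 then (if c2 then (if c3 then None else (if f then Some (3) else None)) else (if c3 then None else (if f then None else Some (2)))) else (if c2 then (if c3 then None else (if f then None else Some (2))) else (if c3 then None else (if f then None else Some (1))))) else (if c1 then (if c2 then (if c3 then (if c4 then (if f then Some (4) else None) else (if f then Some (3) else None)) else (if c4 then (if f then Some (3) else None) else (if f then Some (2) else None))) else (if c3 then (if c4 then (if f then None else Some (3)) else (if f then None else Some (2))) else (if c4 then (if f then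 None else Some (2)) else (if f then None else Some (1))))) else (if c2 then (if c3 then (if c4 then (if f then None else Some (3)) else (if f then None else Some (2))) else (if c4 then (if f then None else Some (2)) else (if f then None else Some (1)))) else (if c3 then (if c4 then (if f then None else Some (2)) else (if f then None else Some (1))) else (if c4 then (if f then None else Some (1)) else (if f then None else Some (0))))))) else (if p4 then (if c1 then (if c2 then (if c3 then (if c4 then (if f then Some (4) else None) else (if f then Some (3) else None)) else (if c4 then (if f then Some (3) else None) else (if f then Some (2) else None))) else (if c3 then (if c4 then (if f then None else Some (3)) else (if f then None else Some (2))) else (if c4 then (if f then None else Some (2)) else (if f then None else Some (1))))) else (if c2 then (if c3 then (if c4 then (if f then None else Some (3)) else (if f then None else Some (2))) else (if c4 then (if f then None else Some (2)) else (if f then None else Some (1)))) else (if c3 then (if c4 then (if f then None else Some (2)) else (if f then None else Some (1))) else (if c4 then (if f then None else Some (1)) else (if f then None else Some (0)))))) else (if c1 then (if c2 then (if c3 then (if c4 then (if f then Some (3) else None) else (if f then Some (2) else None)) else (if c4 then (if f then Some (2) else None) else (if f then Some (1) else None))) else (if c3 then (if c4 then (if f then None else Some (2)) else (if f then None else Some (1))) else (if c4 then (if f then None else Some (1)) else (if f then None else Some (0))))) else (if c2 then (if c3 then (if c4 then (if f then None else Some (2)) else (if f then None else Some (1))) else (if c4 then (if f then None else Some (1)) else (if f then None else Some (0)))) else (if c3 then (if c4 then (if f then None else Some (1)) else (if f then None else Some (0))) else (if c4 then (if f then None else Some (0)) else (if f then None else Some (-1)))))))) else (if p3 then (if p4 then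 (if c1 then (if c2 then (if c3 then (if f then Some (3) else None) else (if f then Some (2) else None)) else (if c3 then (if f then None else Some (2)) else (if f then None else Some (1)))) else (if c2 then (if c3 then (if f then None else Some (2)) else (if f then None else Some (1))) else (if c3 then (if f then None else Some (1)) else (if f then None else Some (0))))) else (if c1 then (if c2 then (if c3 then (if c4 then (if f then Some (3) else None) else (if f then Some (2) else None)) else (if c4 then (if f then Some (2) else None) else (if f then Some (1) else None))) else (if c3 then (if c4 then (if f then None else Some (2)) else (if f then None else Some (1))) else (if c4 then (if f then None else Some (1)) else (if f then None else Some (0))))) else (if c2 then (if c3 then (if c4 then (if f then None else Some (2)) else (if f then None else Some (1))) else (if c4 then (if f then None else Some (1)) else (if f then None else Some (0)))) else (if c3 then (if c4 then (if f then None else Some (1)) else (if f then None else Some (0))) else (if c4 then (if f then None else Some (0)) else (if f then None else Some (-1))))))) else (if p4 then (if c1 then (if c2 then (if c3 then (if c4 then (if f then Some (3) else None) else (if f then Some (2) else None)) else (if c4 then (if f then Some (2) else None) else (if f then Some (1) else None))) else (if c3 then (if c4 then (if f then None else Some (2)) else (if f then None else Some (1))) else (if c4 then (if f then None else Some (1)) else (if f then None else Some (0))))) else (if c2 then (if c3 then (if c4 then (if f then None else Some (2)) else (if f then None else Some (1))) else (if c4 then (if f then None else Some (1)) else (if f then None else Some (0)))) else (if c3 then (if c4 then (if f then None else Some (1)) else (if f then None else Some (0))) else (if c4 then (if f then None else Some (0)) else (if f then None else Some (-1)))))) else (if c1 then (if c2 then (if c3 then (if c4 then (if f then Some (2) else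 None) else (if f then Some (1) else None)) else (if c4 then (if f then Some (1) else None) else (if f then Some (0) else None))) else (if c3 then (if c4 then (if f then None else Some (1)) else (if f then None else Some (0))) else (if c4 then (if f then None else Some (0)) else (if f then None else Some (-1))))) else (if c2 then (if c3 then (if c4 then (if f then None else Some (1)) else (if f then None else Some (0))) else (if c4 then (if f then None else Some (0)) else (if f then None else Some (-1)))) else (if c3 then (if c4 then (if f then None else Some (0)) else (if f then None else Some (-1))) else (if c4 then (if f then None else Some (-1)) else (if f then None else Some (-2))))))))))"

definition T2 :: "bool \<Rightarrow> bool \<Rightarrow> bool \<Rightarrow> bool \<Rightarrow> bool \<Rightarrow> bool \<Rightarrow> bool \<Rightarrow> bool \<Rightarrow> bool \<Rightarrow> int option" where
  "T2 p1 p2 p3 p4 c1 c2 c3 c4 f = (if p1 then (if p2 then (if p3 then (if p4 then (if c1 then (if c2 then None else (if c3 then None else (if c4 then (if f then Some (6) else None) else (if f then Some (5) else None)))) else (if c2 then None else (if c3 then None else (if c4 then (if f then None else Some (5)) else (if f then None else Some (4)))))) else (if c1 then (if c2 then None else (if c3 then (if c4 then (if f then Some (6) else None) else (if f then Some (5) else None)) else (if c4 then (if f then Some (5) else None) else (if f then Some (4) else None)))) else (if c2 then None else (if c3 then (if c4 then (if f then None else Some (5)) else (if f then None else Some (4))) else (if c4 then (if f then None else Some (4)) else (if f then None else Some (3))))))) else (if p4 then (if c1 then (if c2 then (if c3 then (if c4 then (if f then Some (7) else None) else (if f then Some (6) else None)) else (if c4 then (if f then Some (6) else None) else (if f then Some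 (5) else None))) else (if c3 then (if c4 then (if f then Some (6) else None) else (if f then Some (5) else None)) else (if c4 then (if f then Some (5) else None) else (if f then Some (4) else None)))) else (if c2 then (if c3 then (if c4 then (if f then None else Some (6)) else (if f then None else Some (5))) else (if c4 then (if f then None else Some (5)) else (if f then None else Some (4)))) else (if c3 then (if c4 then (if f then None else Some (5)) else (if f then None else Some (4))) else (if c4 then (if f then None else Some (4)) else (if f then None else Some (3)))))) else (if c1 then (if c3 then (if c4 then (if f then Some (6) else None) else (if f then Some (5) else None)) else (if c4 then (if f then Some (5) else None) else (if f then Some (4) else None))) else (if c3 then (if c4 then (if f then None else Some (5)) else (if f then None else Some (4))) else (if c4 then (if f then None else Some (4)) else (if f then None else Some (3))))))) else (if p3 then (if p4 then (if c1 then (if c2 then (if c3 then (if c4 then (if f then Some (7) else None) else (if f then Some (6) else None)) else (if c4 then (if f then Some (6) else None) else (if f then Some (5) else None))) else (if c3 then (if c4 then (if f then Some (5) else Some (6)) else Some (5)) else (if c4 then Some (5) else Some (4)))) else (if c2 then (if c3 then (if c4 then (if f then None else Some (6)) else (if f then None else Some (5))) else (if c4 then (if f then None else Some (5)) else (if f then None else Some (4)))) else (if c3 then (if c4 then (if f then None else Some (5)) else (if f then None else Some (4))) else (if c4 then (if f then None else Some (4)) else (if f then None else Some (3)))))) else (if c1 then (if c2 then (if c3 then (if c4 then (if f then Some (6) else None) else (if f then Some (5) else None)) else (if c4 then (if f then Some (5) else None) else (if f then Some (4) else None))) else (if c3 then (if c4 then (if f then Some (6) else Some (5)) else (if f then Some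 (5) else Some (4))) else (if c4 then (if f then Some (5) else Some (4)) else (if f then Some (4) else Some (3))))) else (if c2 then (if c3 then (if c4 then (if f then None else Some (6)) else (if f then None else Some (5))) else (if c4 then (if f then None else Some (5)) else (if f then None else Some (4)))) else (if c3 then (if c4 then (if f then None else Some (5)) else (if f then None else Some (4))) else (if c4 then (if f then None else Some (4)) else (if f then None else Some (3))))))) else (if c1 then (if c2 then (if c3 then (if c4 then (if f then Some (6) else None) else (if f then Some (5) else None)) else (if c4 then (if f then Some (5) else None) else (if f then Some (4) else None))) else (if c3 then (if c4 then Some (5) else Some (4)) else (if c4 then Some (4) else Some (3)))) else (if c2 then (if c3 then (if c4 then (if f then None else Some (5)) else (if f then None else Some (4))) else (if c4 then (if f then None else Some (4)) else (if f then None else Some (3)))) else (if c3 then (if c4 then (if f then None else Some (4)) else (if f then None else Some (3))) else (if c4 then (if f then None else Some (3)) else (if f then None else Some (2)))))))) else (if p2 then (if p3 then (if p4 then (if c1 then (if c2 then (if c3 then None else (if c4 then (if f then Some (6) else None) else (if f then Some (5) else None))) else (if c3 then None else (if c4 then (if f then None else Some (5)) else (if f then None else Some (4))))) else (if c2 then (if c3 then None else (if c4 then (if f then None else Some (5)) else (if f then None else Some (4)))) else (if c3 then None else (if c4 then (if f then None else Some (4)) else (if f then None else Some (3)))))) else (if c1 then (if c2 then (if c4 then (if f then Some (6) else None) else (if f then Some (5) else None)) else (if c4 then (if f then None else Some (5)) else (if f then None else Some (4)))) else (if c2 then (if c4 then (if f then None else Some (5)) else (if f then None else Some (4))) else (if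 c4 then (if f then None else Some (4)) else (if f then None else Some (3)))))) else (if c1 then (if c2 then (if c3 then (if c4 then (if f then Some (6) else None) else (if f then Some (5) else None)) else (if c4 then (if f then Some (5) else None) else (if f then Some (4) else None))) else (if c3 then (if c4 then (if f then None else Some (5)) else (if f then None else Some (4))) else (if c4 then (if f then None else Some (4)) else (if f then None else Some (3))))) else (if c2 then (if c3 then (if c4 then (if f then None else Some (5)) else (if f then None else Some (4))) else (if c4 then (if f then None else Some (4)) else (if f then None else Some (3)))) else (if c3 then (if c4 then (if f then None else Some (4)) else (if f then None else Some (3))) else (if c4 then (if f then None else Some (3)) else (if f then None else Some (2))))))) else (if p3 then (if c1 then (if c2 then (if c3 then (if c4 then (if f then Some (6) else None) else (if f then Some (5) else None)) else (if c4 then (if f then Some (5) else None) else (if f then Some (4) else None))) else (if c3 then (if c4 then (if f then None else Some (5)) else (if f then None else Some (4))) else (if c4 then (if f then None else Some (4)) else (if f then None else Some (3))))) else (if c2 then (if c3 then (if c4 then (if f then None else Some (5)) else (if f then None else Some (4))) else (if c4 then (if f then None else Some (4)) else (if f then None else Some (3)))) else (if c3 then (if c4 then (if f then None else Some (4)) else (if f then None else Some (3))) else (if c4 then (if f then None else Some (3)) else (if f then None else Some (2)))))) else (if c1 then (if c2 then (if c3 then (if c4 then (if f then Some (5) else None) else (if f then Some (4) else None)) else (if c4 then (if f then Some (4) else None) else (if f then Some (3) else None))) else (if c3 then (if c4 then (if f then None else Some (4)) else (if f then None else Some (3))) else (if c4 then (if f then None else Some (3)) else (if f then None else Some (2)))))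 else (if c2 then (if c3 then (if c4 then (if f then None else Some (4)) else (if f then None else Some (3))) else (if c4 then (if f then None else Some (3)) else (if f then None else Some (2)))) else (if c3 then (if c4 then (if f then None else Some (3)) else (if f then None else Some (2))) else (if c4 then (if f then None else Some (2)) else (if f then None else Some (1)))))))))"

lemma chk0: "\<forall>p1 p2 p3 p4 c1 c2 c3 c4 f n1 n2 n3 n4. case T0 p1 p2 p3 p4 c1 c2 c3 c4 f of None \<Rightarrow> True | Some v \<Rightarrow>
   (okb p1 p2 p3 p4 c1 c2 c3 c4 n1 n2 n3 n4 \<longrightarrow> \<not> (n1 \<and> n2 \<and> f \<and> \<not> c2) \<longrightarrow>
    le_opt (v + pcb n1 n2 n3 n4) (T1 c1 c2 c3 c4 n1 n2 n3 n4 (n1 \<and> (n2 \<or> f))))"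
  unfolding all_bool_eq by (simp add: T0_def T1_def okb_def pcb_def)

lemma chk1: "\<forall>p1 p2 p3 p4 c1 c2 c3 c4 f n1 n2 n3 n4. case T1 p1 p2 p3 p4 c1 c2 c3 c4 f of None \<Rightarrow> True | Some v \<Rightarrow>
   (okb p1 p2 p3 p4 c1 c2 c3 c4 n1 n2 n3 n4 \<longrightarrow> \<not> (n1 \<and> n2 \<and> f \<and> \<not> c2) \<longrightarrow>
    le_opt (v + pcb n1 n2 n3 n4) (T2 c1 c2 c3 c4 n1 n2 n3 n4 (n1 \<and> (n2 \<or> f))))"
  unfolding all_bool_eq by (simp add: T1_def T2_def okb_def pcb_def)

lemma chk2: "\<forall>p1 p2 p3 p4 c1 c2 c3 c4 f n1 n2 n3 n4. case T2 p1 p2 p3 p4 c1 c2 c3 c4 f of None \<Rightarrow> True | Some v \<Rightarrow>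
   (okb p1 p2 p3 p4 c1 c2 c3 c4 n1 n2 n3 n4 \<longrightarrow> \<not> (n1 \<and> n2 \<and> f \<and> \<not> c2) \<longrightarrow>
    le_opt (v + pcb n1 n2 n3 n4 - 8) (T0 c1 c2 c3 c4 n1 n2 n3 n4 (n1 \<and> (n2 \<or> f))))"
  unfolding all_bool_eq by (simp add: T2_def T0_def okb_def pcb_def)

lemma chkb: "\<forall>c1 c2 c3 c4 n1 n2 n3 n4.
   (okb False False False False c1 c2 c3 c4 n1 n2 n3 n4 \<longrightarrow>
    le_opt (pcb c1 c2 c3 c4 + pcb n1 n2 n3 n4) (T2 c1 c2 c3 c4 n1 n2 n3 n4 (n1 \<and> (n2 \<or> (c1 \<and> c2)))))"
  unfolding all_bool_eq by (simp add: T2_def okb_def pcb_def)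

lemma chke: "\<forall>p1 p2 p3 p4 c1 c2 c3 c4 f. case T1 p1 p2 p3 p4 c1 c2 c3 c4 f of None \<Rightarrow> True | Some v \<Rightarrow>
   (okb p1 p2 p3 p4 c1 c2 c3 c4 False False False False \<longrightarrow> v \<le> 3)"
  unfolding all_bool_eq by (simp add: T1_def okb_def)


definition Tg :: "nat \<Rightarrow> bool \<Rightarrow> bool \<Rightarrow> bool \<Rightarrow> bool \<Rightarrow> bool \<Rightarrow> bool \<Rightarrow> bool \<Rightarrow> bool \<Rightarrow> bool \<Rightarrow> int option" where
  "Tg r = (if r = 0 then T0 else if r = 1 then T1 else T2)"

lemma le_opt_iff: "le_opt a t \<longleftrightarrow> (\<exists>v. t = Some v \<and> a \<le> v)"
  by (cases t) auto

lemma le_opt_mono: "a \<le> b \<Longrightarrow> le_opt b t \<Longrightarrow> le_opt a t"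
  by (cases t) auto

lemma chk_step:
  assumes "Tg r p1 p2 p3 p4 c1 c2 c3 c4 f = Some v" "r < 3"
    "okb p1 p2 p3 p4 c1 c2 c3 c4 n1 n2 n3 n4" "\<not> (n1 \<and> n2 \<and> f \<and> \<not> c2)"
  shows "le_opt (v + pcb n1 n2 n3 n4 + (if r = 2 then - 8 else 0))
           (Tg (Suc r mod 3) c1 c2 c3 c4 n1 n2 n3 n4 (n1 \<and> (n2 \<or> f)))"
proof -
  have "r = 0 \<or> r = 1 \<or> r = 2" using assms(2) by auto
  then show ?thesis
  proof (elim disjE)
    assume r: "r = 0"
    have "case T0 p1 p2 p3 p4 c1 c2 c3 c4 f of None \<Rightarrow> True | Some v \<Rightarrow>
     (okb p1 p2 p3 p4 c1 c2 c3 c4 n1 n2 n3 n4 \<longrightarrow> \<not> (n1 \<and> n2 \<and> f \<and> \<not> c2) \<longrightarrow>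
      le_opt (v + pcb n1 n2 n3 n4) (T1 c1 c2 c3 c4 n1 n2 n3 n4 (n1 \<and> (n2 \<or> f))))"
      by (rule chk0[rule_format])
    then show ?thesis using assms r by (simp add: Tg_def)
  next
    assume r: "r = 1"
    have "case T1 p1 p2 p3 p4 c1 c2 c3 c4 f of None \<Rightarrow> True | Some v \<Rightarrow>
     (okb p1 p2 p3 p4 c1 c2 c3 c4 n1 n2 n3 n4 \<longrightarrow> \<not> (n1 \<and> n2 \<and> f \<and> \<not> c2) \<longrightarrow>
      le_opt (v + pcb n1 n2 n3 n4) (T2 c1 c2 c3 c4 n1 n2 n3 n4 (n1 \<and> (n2 \<or> f))))"
      by (rule chk1[rule_format])
    then show ?thesis using assms r by (simp add: Tg_def)
  next
    assume r: "r = 2"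
    have "case T2 p1 p2 p3 p4 c1 c2 c3 c4 f of None \<Rightarrow> True | Some v \<Rightarrow>
     (okb p1 p2 p3 p4 c1 c2 c3 c4 n1 n2 n3 n4 \<longrightarrow> \<not> (n1 \<and> n2 \<and> f \<and> \<not> c2) \<longrightarrow>
      le_opt (v + pcb n1 n2 n3 n4 - 8) (T0 c1 c2 c3 c4 n1 n2 n3 n4 (n1 \<and> (n2 \<or> f))))"
      by (rule chk2[rule_format])
    then show ?thesis using assms r by (simp add: Tg_def)
  qed
qed

definition rowok :: "(nat \<Rightarrow> nat \<Rightarrow> bool) \<Rightarrow> nat \<Rightarrow> bool" where
  "rowok x i = okb (x (i-1) 1) (x (i-1) 2) (x (i-1) 3) (x (i-1) 4) (x i 1) (x i 2) (x i 3) (x i 4)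
      (x (i+1) 1) (x (i+1) 2) (x (i+1) 3) (x (i+1) 4)"

definition pcr :: "(nat \<Rightarrow> nat \<Rightarrow> bool) \<Rightarrow> nat \<Rightarrow> int" where
  "pcr x i = pcb (x i 1) (x i 2) (x i 3) (x i 4)"

primrec fseq :: "(nat \<Rightarrow> nat \<Rightarrow> bool) \<Rightarrow> nat \<Rightarrow> bool" where
  "fseq x 0 = False"
| "fseq x (Suc i) = (x (Suc i) 1 \<and> (x (Suc i) 2 \<or> fseq x i))"

definition benchAt :: "(nat \<Rightarrow> nat \<Rightarrow> bool) \<Rightarrow> nat \<Rightarrow> bool" where
  "benchAt x i \<longleftrightarrow> x (Suc i) 1 \<and> x (Suc i) 2 \<and> fseq x i \<and> \<not> x i 2"

definition Tf :: "nat \<Rightarrow> (nat \<Rightarrow> nat \<Rightarrow> bool) \<Rightarrow> nat \<Rightarrow> int option" where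
  "Tf r x i = Tg r (x (i-1) 1) (x (i-1) 2) (x (i-1) 3) (x (i-1) 4) (x i 1) (x i 2) (x i 3) (x i 4) (fseq x i)"

lemma inv:
  assumes x0: "\<forall>j. \<not> x 0 j"
    and ok: "\<forall>i. 1 \<le> i \<and> i < m \<longrightarrow> rowok x i"
    and nb: "\<forall>i. 1 \<le> i \<and> i < m \<longrightarrow> \<not> benchAt x i"
    and m2: "2 \<le> m"
  shows "le_opt ((\<Sum>i=1..m. pcr x i) - 8 * int (m div 3)) (Tf (m mod 3) x m)"
  using m2 ok nb
proof (induction m rule: nat_induct_at_least)
  case base
  have "rowok x 1" using base by auto
  then have o: "okb False False False False (x 1 1) (x 1 2) (x 1 3) (x 1 4) (x 2 1) (x 2 2) (x 2 3) (x 2 4)"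
    using x0 by (simp add: rowok_def numeral_2_eq_2)
  have "le_opt (pcb (x 1 1) (x 1 2) (x 1 3) (x 1 4) + pcb (x 2 1) (x 2 2) (x 2 3) (x 2 4))
     (T2 (x 1 1) (x 1 2) (x 1 3) (x 1 4) (x 2 1) (x 2 2) (x 2 3) (x 2 4) (x 2 1 \<and> (x 2 2 \<or> (x 1 1 \<and> x 1 2))))"
    using chkb o by blast
  moreover have "(\<Sum>i=1..2. pcr x i) = pcr x 1 + pcr x 2"
    by (simp add: numeral_2_eq_2)
  moreover have "fseq x 2 = (x 2 1 \<and> (x 2 2 \<or> (x 1 1 \<and> x 1 2)))"
    by (simp add: numeral_2_eq_2)
  ultimately show ?case by (simp add: Tf_def Tg_def pcr_def)
next
  case (Suc m)
  have IH: "le_opt ((\<Sum>i=1..m. pcr x i) - 8 * int (m div 3)) (Tf (m mod 3) x m)"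
    using Suc by auto
  then obtain v where v: "Tf (m mod 3) x m = Some v" "(\<Sum>i=1..m. pcr x i) - 8 * int (m div 3) \<le> v"
    by (auto simp: le_opt_iff)
  have okm: "rowok x m" using Suc by auto
  have nbm: "\<not> benchAt x m" using Suc by auto
  have st: "le_opt (v + pcr x (Suc m) + (if m mod 3 = 2 then - 8 else 0))
           (Tf (Suc (m mod 3) mod 3) x (Suc m))"
    using chk_step[OF v(1)[unfolded Tf_def], of "x (Suc m) 1" "x (Suc m) 2" "x (Suc m) 3" "x (Suc m) 4"]
      okm nbm by (simp add: rowok_def benchAt_def Tf_def pcr_def)
  have e1: "Suc (m mod 3) mod 3 = Suc m mod 3" by (simp add: mod_Suc)
  have e2: "int (Suc m div 3) = int (m div 3) + (if m mod 3 = 2 then 1 else 0)"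
    by (cases "m mod 3 = 2") (simp_all add: div_Suc mod_Suc)
  have e3: "(\<Sum>i=1..Suc m. pcr x i) = (\<Sum>i=1..m. pcr x i) + pcr x (Suc m)"
    using Suc by simp
  show ?case using st v(2) unfolding e1 e2 e3
    by (elim le_opt_mono[rotated]) simp
qed

lemma abstract:
  assumes x0: "\<forall>j. \<not> x 0 j" and xh: "\<forall>j. \<not> x (h+1) j"
    and ok: "\<forall>i. 1 \<le> i \<and> i \<le> h \<longrightarrow> rowok x i"
    and nb: "\<forall>i. 1 \<le> i \<and> i < h \<longrightarrow> \<not> benchAt x i"
    and h: "h = 3 * k + 1" and k: "k \<ge> 1"
  shows "(\<Sum>i=1..h. pcr x i) \<le> 8 * int k + 3"
proof -
  have "le_opt ((\<Sum>i=1..h. pcr x i) - 8 * int (h div 3)) (Tf (h mod 3) x h)"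
    by (rule inv) (use x0 ok nb h k in auto)
  moreover have "h mod 3 = 1" "h div 3 = k" using h by auto
  ultimately obtain v where v: "T1 (x (h-1) 1) (x (h-1) 2) (x (h-1) 3) (x (h-1) 4) (x h 1) (x h 2) (x h 3) (x h 4) (fseq x h) = Some v"
     "(\<Sum>i=1..h. pcr x i) - 8 * int k \<le> v"
    by (auto simp: le_opt_iff Tf_def Tg_def)
  have "rowok x h" using ok h by auto
  then have o: "okb (x (h-1) 1) (x (h-1) 2) (x (h-1) 3) (x (h-1) 4) (x h 1) (x h 2) (x h 3) (x h 4) False False False False"
    using xh by (simp add: rowok_def)
  have "v \<le> 3" using chke[rule_format, of "x (h-1) 1" "x (h-1) 2" "x (h-1) 3" "x (h-1) 4" "x h 1" "x h 2" "x h 3" "x h 4" "fseq x h"]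
    v(1) o by simp
  then show ?thesis using v(2) by simp
qed



lemma nbr: "1 \<le> i \<Longrightarrow> 1 \<le> j \<Longrightarrow> {d\<in>W. adj (i,j) d} = W \<inter> {(i,j+1),(i,j-1),(i+1,j),(i-1,j)}"
  by (auto simp: adj_def)

lemma card_ins: "finite B \<Longrightarrow> a \<notin> B \<Longrightarrow> card (W \<inter> insert a B) = of_bool (a \<in> W) + card (W \<inter> B)"
  by (auto simp: Int_insert_right)

lemma card4: "distinct [a,b,c,d] \<Longrightarrow> card (W \<inter> {a,b,c,d}) =
   of_bool (a\<in>W) + of_bool (b\<in>W) + of_bool (c\<in>W) + of_bool (d\<in>W)"
  by (simp add: card_ins)

lemma degree_eq: "1 \<le> i \<Longrightarrow> 1 \<le> j \<Longrightarrow> degree W (i,j) =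
   of_bool ((i,j+1)\<in>W) + of_bool ((i,j-1)\<in>W) + of_bool ((i+1,j)\<in>W) + of_bool ((i-1,j)\<in>W)"
  unfolding degree_def nbr by (subst card4) auto

definition xW :: "(nat \<times> nat) set \<Rightarrow> nat \<Rightarrow> nat \<Rightarrow> bool" where
  "xW W i j = ((i,j) \<in> W)"

lemma ob3: "(\<not> (a \<and> b \<and> c)) = (of_bool a + of_bool b + of_bool c \<le> (2::nat))"
  by (cases a; cases b; cases c) auto

lemma ob4: "(\<not> (a \<and> b \<and> c) \<and> \<not> (a \<and> b \<and> d) \<and> \<not> (a \<and> c \<and> d) \<and> \<not> (b \<and> c \<and> d))
   = (of_bool a + of_bool b + of_bool c + of_bool d \<le> (2::nat))"
  by (cases a; cases b; cases c; cases d) auto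

lemma okb_alt: "okb p1 p2 p3 p4 c1 c2 c3 c4 n1 n2 n3 n4 \<longleftrightarrow>
   (c1 \<longrightarrow> of_bool c2 + of_bool n1 + of_bool p1 \<le> (2::nat)) \<and>
   (c2 \<longrightarrow> of_bool c3 + of_bool c1 + of_bool n2 + of_bool p2 \<le> (2::nat)) \<and>
   (c3 \<longrightarrow> of_bool c4 + of_bool c2 + of_bool n3 + of_bool p3 \<le> (2::nat)) \<and>
   (c4 \<longrightarrow> of_bool c3 + of_bool n4 + of_bool p4 \<le> (2::nat))"
  unfolding okb_def ob3[symmetric] ob4[symmetric] by blast

lemma deg_cols:
  assumes "1 \<le> i" "W \<subseteq> {1..h} \<times> {1..4}"
  shows "degree W (i,1) = of_bool ((i,2)\<in>W) + of_bool ((i+1,1)\<in>W) + of_bool ((i-1,1)\<in>W)"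
    "degree W (i,2) = of_bool ((i,3)\<in>W) + of_bool ((i,1)\<in>W) + of_bool ((i+1,2)\<in>W) + of_bool ((i-1,2)\<in>W)"
    "degree W (i,3) = of_bool ((i,4)\<in>W) + of_bool ((i,2)\<in>W) + of_bool ((i+1,3)\<in>W) + of_bool ((i-1,3)\<in>W)"
    "degree W (i,4) = of_bool ((i,3)\<in>W) + of_bool ((i+1,4)\<in>W) + of_bool ((i-1,4)\<in>W)"
proof -
  have n0: "(i,0) \<notin> W" "(i,5) \<notin> W" using assms by auto
  show "degree W (i,1) = of_bool ((i,2)\<in>W) + of_bool ((i+1,1)\<in>W) + of_bool ((i-1,1)\<in>W)"
    using degree_eq[of i 1 W, unfolded one_add_one diff_self_eq_0] assms n0 by simp
  show "degree W (i,2) = of_bool ((i,3)\<in>W) + of_bool ((i,1)\<in>W) + of_bool ((i+1,2)\<in>W) + of_bool ((i-1,2)\<in>W)"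
    using degree_eq[of i 2 W] assms by simp
  show "degree W (i,3) = of_bool ((i,4)\<in>W) + of_bool ((i,2)\<in>W) + of_bool ((i+1,3)\<in>W) + of_bool ((i-1,3)\<in>W)"
    using degree_eq[of i 3 W] assms by simp
  show "degree W (i,4) = of_bool ((i,3)\<in>W) + of_bool ((i+1,4)\<in>W) + of_bool ((i-1,4)\<in>W)"
    using degree_eq[of i 4 W] assms n0 by simp
qed

lemma rowok_deg:
  assumes "1 \<le> i" "W \<subseteq> {1..h} \<times> {1..4}"
  shows "rowok (xW W) i \<longleftrightarrow> ((i,1) \<in> W \<longrightarrow> degree W (i,1) \<le> 2) \<and> ((i,2) \<in> W \<longrightarrow> degree W (i,2) \<le> 2)
     \<and> ((i,3) \<in> W \<longrightarrow> degree W (i,3) \<le> 2) \<and> ((i,4) \<in> W \<longrightarrow> degree W (i,4) \<le> 2)"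
  unfolding rowok_def okb_alt deg_cols[OF assms] xW_def by (rule refl)

lemma W2_iff:
  assumes sub: "W \<subseteq> {1..h} \<times> {1..4}"
  shows "W \<in> W2 h 4 \<longleftrightarrow> (\<forall>i. 1 \<le> i \<and> i \<le> h \<longrightarrow> rowok (xW W) i)"
proof
  assume w: "W \<in> W2 h 4"
  show "\<forall>i. 1 \<le> i \<and> i \<le> h \<longrightarrow> rowok (xW W) i"
    using w rowok_deg[OF _ sub] by (auto simp: W2_def)
next
  assume r: "\<forall>i. 1 \<le> i \<and> i \<le> h \<longrightarrow> rowok (xW W) i"
  have "degree W c \<le> 2" if c: "c \<in> W" for c
  proof -
    obtain i j where ij: "c = (i,j)" by force
    have i: "1 \<le> i" "i \<le> h" and j: "j \<in> {1,2,3,4}" using sub c ij by auto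
    have ok: "rowok (xW W) i" using r i by auto
    show ?thesis using rowok_deg[OF i(1) sub] ok j c ij by auto
  qed
  then show "W \<in> W2 h 4" using sub by (auto simp: W2_def)
qed

lemma card_rows:
  assumes sub: "W \<subseteq> {1..h} \<times> {1..4}"
  shows "int (card W) = (\<Sum>i=1..h. pcr (xW W) i)"
proof -
  have e: "W = Sigma {1..h} (\<lambda>i. {j. (i,j) \<in> W} \<inter> {1,2,3,4})"
    using sub by auto
  have c: "card ({j. (i,j) \<in> W} \<inter> {1,2,3,4}) = nat (pcr (xW W) i)" for i
  proof -
    have "card ({j. (i,j) \<in> W} \<inter> {1,2,3,4}) = of_bool (1 \<in> {j. (i,j) \<in> W}) + of_bool (2 \<in> {j. (i,j) \<in> W})
       + of_bool (3 \<in> {j. (i,j) \<in> W}) + of_bool (4 \<in> {j. (i,j) \<in> W})"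
      by (rule card4) simp
    then show ?thesis by (simp add: pcr_def pcb_def xW_def)
  qed
  have "card W = (\<Sum>i=1..h. card ({j. (i,j) \<in> W} \<inter> {1,2,3,4}))"
    by (subst e) (simp add: card_SigmaI)
  have nn: "0 \<le> pcr (xW W) i" for i by (simp add: pcr_def pcb_def)
  have "int (card W) = (\<Sum>i=1..h. int (card ({j. (i,j) \<in> W} \<inter> {1,2,3,4})))"
    using \<open>card W = _\<close> by (simp only: of_nat_sum)
  also have "\<dots> = (\<Sum>i=1..h. pcr (xW W) i)"
    by (rule sum.cong[OF refl]) (simp only: c, simp add: nn)
  finally show ?thesis .
qed

lemma fseq_trace: "fseq x m \<Longrightarrow> \<exists>s. 1 \<le> s \<and> s \<le> m \<and> x s 1 \<and> x s 2 \<and> (\<forall>t. s < t \<and> t \<le> m \<longrightarrow> x t 1 \<and> \<not> x t 2)"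
proof (induction m)
  case 0 then show ?case by simp
next
  case (Suc m)
  show ?case
  proof (cases "x (Suc m) 2")
    case True then show ?thesis using Suc.prems by (intro exI[of _ "Suc m"]) auto
  next
    case False
    then have "fseq x m" "x (Suc m) 1" using Suc.prems by auto
    then obtain s where s: "1 \<le> s \<and> s \<le> m \<and> x s 1 \<and> x s 2 \<and> (\<forall>t. s < t \<and> t \<le> m \<longrightarrow> x t 1 \<and> \<not> x t 2)"
      using Suc.IH by blast
    show ?thesis
      apply (rule exI[of _ s])
      using s False \<open>x (Suc m) 1\<close> le_Suc_eq by auto
  qed
qed

lemma bench_ex:
  assumes "benchAt x i"
  shows "\<exists>n s. 3 \<le> n \<and> 1 \<le> s \<and> s + n - 1 = Suc i \<and> (\<forall>t<n. x (s+t) 1) \<and> x s 2 \<and> x (s+n-1) 2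
     \<and> (\<forall>t. 1 \<le> t \<and> t \<le> n - 2 \<longrightarrow> \<not> x (s+t) 2)"
proof -
  have a: "x (Suc i) 1" "x (Suc i) 2" "fseq x i" "\<not> x i 2" using assms by (auto simp: benchAt_def)
  obtain s where s: "1 \<le> s" "s \<le> i" "x s 1" "x s 2" "\<forall>t. s < t \<and> t \<le> i \<longrightarrow> x t 1 \<and> \<not> x t 2"
    using fseq_trace[OF a(3)] by blast
  have si: "s < i" using s a(4) by (cases "s = i") auto
  show ?thesis
  proof (intro exI conjI)
    show "3 \<le> i + 2 - s" using si by simp
    show "s + (i + 2 - s) - 1 = Suc i" using si by simp
    show "\<forall>t<i + 2 - s. x (s + t) 1"
    proof (intro allI impI)
      fix t assume t: "t < i + 2 - s"
      show "x (s + t) 1"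
      proof (cases "t = 0")
        case True then show ?thesis using s by simp
      next
        case False
        show ?thesis
        proof (cases "s + t = Suc i")
          case True then show ?thesis using a by simp
        next
          case False then show ?thesis using s(5) \<open>t \<noteq> 0\<close> t by auto
        qed
      qed
    qed
    show "x (s + (i + 2 - s) - 1) 2" using si a by simp
    show "\<forall>t. 1 \<le> t \<and> t \<le> i + 2 - s - 2 \<longrightarrow> \<not> x (s + t) 2"
      using s(5) si by auto
  qed (use s in auto)
qed

definition xM :: "(nat \<times> nat) set \<Rightarrow> nat \<Rightarrow> nat \<Rightarrow> bool" where
  "xM W i j = ((i, 5 - j) \<in> W)"

lemma okb_rev: "okb p1 p2 p3 p4 c1 c2 c3 c4 n1 n2 n3 n4 = okb p4 p3 p2 p1 c4 c3 c2 c1 n4 n3 n2 n1"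
  unfolding okb_def by blast

lemma rowok_M: "rowok (xW W) i \<Longrightarrow> rowok (xM W) i"
  unfolding rowok_def xM_def xW_def by (subst okb_rev) simp

lemma pcr_M: "pcr (xM W) i = pcr (xW W) i"
  by (simp add: pcr_def pcb_def xM_def xW_def)



definition pat :: "nat \<Rightarrow> nat \<Rightarrow> bool" where
  "pat a j = (if a = 0 then j = 1 \<or> j = 2 \<or> j = 4 else if a = 1 then j = 1 \<or> j = 3 \<or> j = 4 else j = 2 \<or> j = 3)"

definition cellV :: "nat \<Rightarrow> nat \<Rightarrow> nat \<Rightarrow> bool" where
  "cellV h i j \<longleftrightarrow> 1 \<le> i \<and> i \<le> h \<and> 1 \<le> j \<and> j \<le> 4 \<and>
     (if i = 1 then j \<noteq> 1 else if i = h then j \<noteq> 4 else pat ((i-2) mod 3) j)"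

lemma cellV_0: "cellV h 0 = (\<lambda>j. False)" by (auto simp: cellV_def)
lemma cellV_out: "cellV h (Suc h) = (\<lambda>j. False)" by (auto simp: cellV_def)
lemma cellV_1: "2 \<le> h \<Longrightarrow> cellV h 1 = (\<lambda>j. j = 2 \<or> j = 3 \<or> j = 4)" by (auto simp: cellV_def)
lemma cellV_h: "2 \<le> h \<Longrightarrow> cellV h h = (\<lambda>j. j = 1 \<or> j = 2 \<or> j = 3)" by (auto simp: cellV_def)
lemma cellV_mid: "2 \<le> i \<Longrightarrow> i < h \<Longrightarrow> cellV h i = pat ((i-2) mod 3)"
  by (rule ext) (auto simp: cellV_def pat_def)

lemma rowok_of: "x (i-1) = r0 \<Longrightarrow> x i = r1 \<Longrightarrow> x (i+1) = r2 \<Longrightarrow>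
  rowok x i = okb (r0 1) (r0 2) (r0 3) (r0 4) (r1 1) (r1 2) (r1 3) (r1 4) (r2 1) (r2 2) (r2 3) (r2 4)"
  by (simp add: rowok_def)

lemma cellV_rowok:
  assumes h: "h = 3 * k + 1" and k: "2 \<le> k" and i: "1 \<le> i" "i \<le> h"
  shows "rowok (cellV h) i"
proof -
  have h7: "7 \<le> h" using h k by simp
  have hm: "(h - 3) mod 3 = 1" "(h - 1 - 2) mod 3 = 1" "(h - 2 - 2) mod 3 = 0"
  proof -
    have "h - 3 = 3 * (k - 1) + 1" using h k by simp
    then show "(h - 3) mod 3 = 1" by (simp only: mod_mult_self4) simp
    have "h - 1 - 2 = 3 * (k - 1) + 1" using h k by simp
    then show "(h - 1 - 2) mod 3 = 1" by (simp only: mod_mult_self4) simp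
    have "h - 2 - 2 = 3 * (k - 1)" using h k by simp
    then show "(h - 2 - 2) mod 3 = 0" by simp
  qed
  consider "i = 1" | "i = 2" | "3 \<le> i \<and> i + 2 \<le> h" | "i + 1 = h" | "i = h" using i by linarith
  then show ?thesis
  proof cases
    case 1
    have r: "cellV h (i - 1) = (\<lambda>j. False)" "cellV h i = (\<lambda>j. j = 2 \<or> j = 3 \<or> j = 4)" "cellV h (i + 1) = pat 0"
    proof -
      show "cellV h (i - 1) = (\<lambda>j. False)" using 1 cellV_0 by simp
      show "cellV h i = (\<lambda>j. j = 2 \<or> j = 3 \<or> j = 4)" using 1 h7 cellV_1[of h] by simp
      have "cellV h 2 = pat 0" using h7 by (subst cellV_mid) auto
      then show "cellV h (i + 1) = pat 0" using 1 by (simp add: numeral_2_eq_2)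
    qed
    show ?thesis unfolding rowok_of[OF r] by (simp add: okb_def pat_def)
  next
    case 2
    have r: "cellV h (i - 1) = (\<lambda>j. j = 2 \<or> j = 3 \<or> j = 4)" "cellV h i = pat 0" "cellV h (i + 1) = pat 1"
    proof -
      have "cellV h 1 = (\<lambda>j. j = 2 \<or> j = 3 \<or> j = 4)" using h7 cellV_1[of h] by simp
      then show "cellV h (i - 1) = (\<lambda>j. j = 2 \<or> j = 3 \<or> j = 4)" using 2 by simp
      show "cellV h i = pat 0" using 2 h7 by (subst cellV_mid) auto
      have "cellV h 3 = pat 1" using h7 by (subst cellV_mid) auto
      then show "cellV h (i + 1) = pat 1" using 2 by simp
    qed
    show ?thesis unfolding rowok_of[OF r] by (simp add: okb_def pat_def)
  next
    case 3
    define a where "a = (i - 2) mod 3"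
    have a3: "a < 3" unfolding a_def by simp
    have t: "i - 1 - 2 = i - 3" "i - 2 = (i - 3) + 1" "i + 1 - 2 = (i - 3) + 2" using 3 by auto
    have am: "(i - 1 - 2) mod 3 = (a + 2) mod 3" "(i + 1 - 2) mod 3 = (a + 1) mod 3"
      unfolding a_def t by (simp only: mod_add_left_eq, simp)+
    have r: "cellV h (i - 1) = pat ((a + 2) mod 3)" "cellV h i = pat a" "cellV h (i + 1) = pat ((a + 1) mod 3)"
    proof -
      show "cellV h (i - 1) = pat ((a + 2) mod 3)" using 3 am by (subst cellV_mid) auto
      show "cellV h i = pat a" using 3 a_def by (subst cellV_mid) auto
      show "cellV h (i + 1) = pat ((a + 1) mod 3)" using 3 am by (subst cellV_mid) auto
    qed
    have "a = 0 \<or> a = 1 \<or> a = 2" using a3 by auto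
    then show ?thesis unfolding rowok_of[OF r] by (elim disjE) (simp_all add: okb_def pat_def)
  next
    case 4
    have r: "cellV h (i - 1) = pat 0" "cellV h i = pat 1" "cellV h (i + 1) = (\<lambda>j. j = 1 \<or> j = 2 \<or> j = 3)"
    proof -
      have e: "i - 1 - 2 = h - 2 - 2" "i - 2 = h - 1 - 2" using 4 by auto
      have c1: "cellV h (i - 1) = pat ((i - 1 - 2) mod 3)" by (rule cellV_mid) (use 4 h7 in auto)
      show "cellV h (i - 1) = pat 0" using c1 unfolding e hm .
      have c2: "cellV h i = pat ((i - 2) mod 3)" by (rule cellV_mid) (use 4 h7 in auto)
      show "cellV h i = pat 1" using c2 unfolding e hm .
      show "cellV h (i + 1) = (\<lambda>j. j = 1 \<or> j = 2 \<or> j = 3)" using 4 h7 cellV_h by auto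
    qed
    show ?thesis unfolding rowok_of[OF r] by (simp add: okb_def pat_def)
  next
    case 5
    have r: "cellV h (i - 1) = pat 1" "cellV h i = (\<lambda>j. j = 1 \<or> j = 2 \<or> j = 3)" "cellV h (i + 1) = (\<lambda>j. False)"
    proof -
      have e: "i - 1 - 2 = h - 1 - 2" using 5 by auto
      have c1: "cellV h (i - 1) = pat ((i - 1 - 2) mod 3)" by (rule cellV_mid) (use 5 h7 in auto)
      show "cellV h (i - 1) = pat 1" using c1 unfolding e hm .
      show "cellV h i = (\<lambda>j. j = 1 \<or> j = 2 \<or> j = 3)" using 5 h7 cellV_h by auto
      show "cellV h (i + 1) = (\<lambda>j. False)" using 5 cellV_out by auto
    qed
    show ?thesis unfolding rowok_of[OF r] by (simp add: okb_def pat_def)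
  qed
qed

definition Vc :: "nat \<Rightarrow> (nat \<times> nat) set" where
  "Vc h = {(i,j). cellV h i j}"

lemma Vc_sub: "Vc h \<subseteq> {1..h} \<times> {1..4}"
  by (auto simp: Vc_def cellV_def)

lemma xW_Vc: "xW (Vc h) = cellV h"
  by (simp add: xW_def Vc_def fun_eq_iff)

lemma pcr_mid: "2 \<le> i \<Longrightarrow> i < h \<Longrightarrow> pcr (cellV h) i = (if (i-2) mod 3 = 2 then 2 else 3)"
proof -
  assume a: "2 \<le> i" "i < h"
  have "(i-2) mod 3 < 3" by simp
  then have "(i-2) mod 3 = 0 \<or> (i-2) mod 3 = 1 \<or> (i-2) mod 3 = 2" by auto
  then show ?thesis using a by (auto simp: pcr_def pcb_def cellV_mid pat_def)
qed

lemma pcr_mid': "2 \<le> i \<Longrightarrow> i < h \<Longrightarrow> (i-2) mod 3 = a \<Longrightarrow> pcr (cellV h) i = (if a = 2 then 2 else 3)"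
  using pcr_mid by simp

lemma sum3: "(\<Sum>i\<in>{2..<Suc (Suc (Suc n))}. f i) = (\<Sum>i\<in>{2..<n}. f i) + f n + f (Suc n) + f (Suc (Suc n))"
  if "2 \<le> n" for f :: "nat \<Rightarrow> int"
proof -
  have "(\<Sum>i\<in>{2..<Suc (Suc (Suc n))}. f i) = (\<Sum>i\<in>{2..<Suc (Suc n)}. f i) + f (Suc (Suc n))"
    by (rule sum.atLeastLessThan_Suc) (use that in simp)
  also have "(\<Sum>i\<in>{2..<Suc (Suc n)}. f i) = (\<Sum>i\<in>{2..<Suc n}. f i) + f (Suc n)"
    by (rule sum.atLeastLessThan_Suc) (use that in simp)
  also have "(\<Sum>i\<in>{2..<Suc n}. f i) = (\<Sum>i\<in>{2..<n}. f i) + f n"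
    by (rule sum.atLeastLessThan_Suc) (use that in simp)
  finally show ?thesis .
qed

lemma sum2: "(\<Sum>i\<in>{2..<Suc (Suc n)}. f i) = (\<Sum>i\<in>{2..<n}. f i) + f n + f (Suc n)"
  if "2 \<le> n" for f :: "nat \<Rightarrow> int"
proof -
  have "(\<Sum>i\<in>{2..<Suc (Suc n)}. f i) = (\<Sum>i\<in>{2..<Suc n}. f i) + f (Suc n)"
    by (rule sum.atLeastLessThan_Suc) (use that in simp)
  also have "(\<Sum>i\<in>{2..<Suc n}. f i) = (\<Sum>i\<in>{2..<n}. f i) + f n"
    by (rule sum.atLeastLessThan_Suc) (use that in simp)
  finally show ?thesis .
qed

lemma sum_mid: "3 * m + 2 \<le> h \<Longrightarrow> (\<Sum>i\<in>{2..<3*m+2}. pcr (cellV h) i) = 8 * int m"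
proof (induction m)
  case 0 then show ?case by simp
next
  case (Suc m)
  have e: "3 * Suc m + 2 = Suc (Suc (Suc (3*m+2)))" by simp
  have p1: "pcr (cellV h) (3*m+2) = 3"
    by (rule trans[OF pcr_mid'[of _ _ 0]]) (use Suc.prems in \<open>simp_all\<close>)
  have m1: "(Suc (3*m+2) - 2) mod 3 = 1" "(Suc (Suc (3*m+2)) - 2) mod 3 = 2"
  proof -
    have "Suc (3*m+2) - 2 = 3*m+1" by simp
    then show "(Suc (3*m+2) - 2) mod 3 = 1" by (simp only: mod_mult_self4) simp
    have "Suc (Suc (3*m+2)) - 2 = 3*m+2" by simp
    then show "(Suc (Suc (3*m+2)) - 2) mod 3 = 2" by (simp only: mod_mult_self4) simp
  qed
  have p2: "pcr (cellV h) (Suc (3*m+2)) = 3"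
    using pcr_mid'[OF _ _ m1(1)] Suc.prems by simp
  have p3: "pcr (cellV h) (Suc (Suc (3*m+2))) = 2"
    using pcr_mid'[OF _ _ m1(2)] Suc.prems by simp
  have ih: "(\<Sum>i\<in>{2..<3*m+2}. pcr (cellV h) i) = 8 * int m" using Suc by simp
  show ?case unfolding e sum3[OF le_add2] ih p1 p2 p3 by simp
qed

lemma card_Vc:
  assumes h: "h = 3 * k + 1" and k: "2 \<le> k"
  shows "int (card (Vc h)) = 8 * int k + 4"
proof -
  have "int (card (Vc h)) = (\<Sum>i=1..h. pcr (cellV h) i)"
    using card_rows[OF Vc_sub] by (simp add: xW_Vc)
  also have "\<dots> = pcr (cellV h) 1 + (\<Sum>i\<in>{2..<h}. pcr (cellV h) i) + pcr (cellV h) h"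
  proof -
    have "(\<Sum>i=1..h. pcr (cellV h) i) = (\<Sum>i\<in>{1..<Suc (h-1)}. pcr (cellV h) i) + pcr (cellV h) h"
      using h by (simp add: atLeastLessThanSuc_atLeastAtMost[symmetric] sum.atLeastLessThan_Suc)
    also have "(\<Sum>i\<in>{1..<Suc (h-1)}. pcr (cellV h) i) = pcr (cellV h) 1 + (\<Sum>i\<in>{2..<h}. pcr (cellV h) i)"
      using h k by (subst sum.atLeast_Suc_lessThan) (simp_all add: numeral_2_eq_2)
    finally show ?thesis .
  qed
  also have "(\<Sum>i\<in>{2..<h}. pcr (cellV h) i) = 8 * int (k - 1) + 6"
  proof -
    define m where "m = k - 1"
    have e: "h = Suc (Suc (3 * m + 2))" using h k unfolding m_def by simp
    have lt: "3*m+2 < h" "Suc (3*m+2) < h" "3*m+2 \<le> h" using e by linarith+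
    have m0: "(3*m+2 - 2) mod 3 = 0" by simp
    have m1: "(Suc (3*m+2) - 2) mod 3 = 1"
    proof -
      have "Suc (3*m+2) - 2 = 3*m+1" by simp
      then show "(Suc (3*m+2) - 2) mod 3 = 1" by (simp only: mod_mult_self4) simp
    qed
    have p1: "pcr (cellV h) (3*m+2) = 3"
      using pcr_mid'[OF _ lt(1) m0] by simp
    have p2: "pcr (cellV h) (Suc (3*m+2)) = 3"
      using pcr_mid'[OF _ lt(2) m1] by simp
    have s: "(\<Sum>i\<in>{2..<3*m+2}. pcr (cellV h) i) = 8 * int m"
      by (rule sum_mid[OF lt(3)])
    have "(\<Sum>i\<in>{2..<Suc (Suc (3 * m + 2))}. pcr (cellV h) i) = 8 * int m + 6"
      unfolding sum2[OF le_add2] s p1 p2 by simp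
    moreover have "{2..<h} = {2..<Suc (Suc (3*m+2))}" using e by (simp only:)
    ultimately show ?thesis unfolding m_def[symmetric] by (simp only:)
  qed
  also have "pcr (cellV h) 1 = 3"
  proof -
    have c1: "cellV h 1 = (\<lambda>j. j = 2 \<or> j = 3 \<or> j = 4)" by (rule cellV_1) (use h k in simp)
    show ?thesis unfolding pcr_def c1 pcb_def by simp
  qed
  also have "pcr (cellV h) h = 3"
  proof -
    have c1: "cellV h h = (\<lambda>j. j = 1 \<or> j = 2 \<or> j = 3)" by (rule cellV_h) (use h k in simp)
    show ?thesis unfolding pcr_def c1 pcb_def by simp
  qed
  finally show ?thesis using k by simp
qed

lemma Vc_W2: assumes "h = 3 * k + 1" "2 \<le> k" shows "Vc h \<in> W2 h 4"
  using W2_iff[OF Vc_sub] cellV_rowok[OF assms] by (simp add: xW_Vc)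

lemma bench_W: "benchAt (xW W) i \<Longrightarrow> i < h \<Longrightarrow> has_bench h W 1 2"
proof -
  assume b: "benchAt (xW W) i" and ih: "i < h"
  obtain n s where ns: "3 \<le> n" "1 \<le> s" "s + n - 1 = Suc i" "\<forall>t<n. xW W (s+t) 1" "xW W s 2" "xW W (s+n-1) 2"
     "\<forall>t. 1 \<le> t \<and> t \<le> n - 2 \<longrightarrow> \<not> xW W (s+t) 2"
    using bench_ex[OF b] by blast
  show ?thesis unfolding has_bench_def
    apply (rule conjI, simp, rule exI[of _ n], rule exI[of _ s])
    using ns ih by (auto simp: xW_def)
qed

lemma bench_M: "benchAt (xM W) i \<Longrightarrow> i < h \<Longrightarrow> has_bench h W 4 3"
proof -
  assume b: "benchAt (xM W) i" and ih: "i < h"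
  obtain n s where ns: "3 \<le> n" "1 \<le> s" "s + n - 1 = Suc i" "\<forall>t<n. xM W (s+t) 1" "xM W s 2" "xM W (s+n-1) 2"
     "\<forall>t. 1 \<le> t \<and> t \<le> n - 2 \<longrightarrow> \<not> xM W (s+t) 2"
    using bench_ex[OF b] by blast
  show ?thesis unfolding has_bench_def
    apply (rule conjI, simp, rule exI[of _ n], rule exI[of _ s])
    using ns ih by (auto simp: xM_def)
qed

theorem mainTheorem17:
  fixes k h :: nat and W :: "(nat \<times> nat) set"
  assumes "k \<ge> 2" and "h = 3 * k + 1" and "two_full h 4 W"
  shows "has_bench h W 1 2 \<and> has_bench h W 4 3"
proof -
  have w: "W \<in> W2 h 4" and mx: "\<forall>V\<in>W2 h 4. card V \<le> card W" using assms(3) by (auto simp: two_full_def)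
  have sub: "W \<subseteq> {1..h} \<times> {1..4}" using w by (simp add: W2_def)
  have "card (Vc h) \<le> card W" using mx Vc_W2[OF assms(2,1)] by blast
  then have big: "8 * int k + 4 \<le> int (card W)" using card_Vc[OF assms(2,1)] by linarith
  have ok: "\<forall>i. 1 \<le> i \<and> i \<le> h \<longrightarrow> rowok (xW W) i" using W2_iff[OF sub] w by blast
  have c: "int (card W) = (\<Sum>i=1..h. pcr (xW W) i)" by (rule card_rows[OF sub])
  have k1: "1 \<le> k" using assms by simp
  show ?thesis
  proof
    show "has_bench h W 1 2"
    proof (rule ccontr)
      assume nb: "\<not> has_bench h W 1 2"
      have "(\<Sum>i=1..h. pcr (xW W) i) \<le> 8 * int k + 3"
      proof (rule abstract[OF _ _ ok _ assms(2) k1])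
        show "\<forall>j. \<not> xW W 0 j" using sub by (auto simp: xW_def)
        show "\<forall>j. \<not> xW W (h+1) j" using sub by (auto simp: xW_def)
        show "\<forall>i. 1 \<le> i \<and> i < h \<longrightarrow> \<not> benchAt (xW W) i" using nb bench_W by blast
      qed
      then show False using big c by linarith
    qed
    show "has_bench h W 4 3"
    proof (rule ccontr)
      assume nb: "\<not> has_bench h W 4 3"
      have "(\<Sum>i=1..h. pcr (xM W) i) \<le> 8 * int k + 3"
      proof (rule abstract[OF _ _ _ _ assms(2) k1])
        show "\<forall>j. \<not> xM W 0 j" using sub by (auto simp: xM_def)
        show "\<forall>j. \<not> xM W (h+1) j" using sub by (auto simp: xM_def)
        show "\<forall>i. 1 \<le> i \<and> i \<le> h \<longrightarrow> rowok (xM W) i" using ok rowok_M by blast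
        show "\<forall>i. 1 \<le> i \<and> i < h \<longrightarrow> \<not> benchAt (xM W) i" using nb bench_M by blast
      qed
      then show False using big c by (simp add: pcr_M)
    qed
  qed
qed

end
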